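(* A perfect Euler cuboid exists if and only if there exist rational numbers $a,b,u$ with $0<u<1$ and $(a,b)\in D_{ab}$ such that $P(a,b,u)=0$.
   Context: An Euler cuboid is a rectangular parallelepiped whose three edge lengths and three face diagonal lengths are all positive integers; a perfect Euler cuboid is an Euler cuboid whose space diagonal also has integer length, i.e. a $7$-tuple of positive integers $(a,b,c,\alpha,\beta,\gamma,d)$ with $a^2+b^2=\gamma^2$, $b^2+c^2=\alpha^2$, $c^2+a^2=\beta^2$, $a^2+b^2+c^2=d^2$. Let $D_{uz}=\{(u,z)\in\mathbb{R}^2: 0<u<1,\ 0<z<1\}$. Define $f\colon D_{uz}\to\mathbb{R}^2$ by $f(u,z)=(a(u,z),b(u,z))$, where $a(u,z)$ and $b(u,z)$ are the positive real numbers determined by $$a^2=\frac{u^2+z^2}{u^2z^2+1},\qquad b^2=\frac{(1+u^2)(1+z^2)-2z(1-u^2)}{(1+u^2)(1+z^2)+2z(1-u^2)}$$ (both right-hand sides are positive on $D_{uz}$), and let $D_{ab}=f(D_{uz})$. The characteristic polynomial is $$\begin{aligned}P(a,b,u)={}&u^4a^4b^4+6a^4u^2b^4-2u^4a^4b^2-2u^4a^2b^4+4u^2b^4a^2+4a^4u^2b^2-12u^4a^2b^2\\&+u^4a^4+u^4b^4+a^4b^4+6a^4u^2+6u^2b^4-8a^2b^2u^2-2u^4a^2-2u^4b^2-2a^4b^2-2b^4a^2\\&+u^4+b^4+a^4+4a^2u^2+4b^2u^2-12b^2a^2+6u^2-2a^2-2b^2+1.\end{aligned}$$ *)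

theory Defs
  imports Complex_Main
begin

definition perfect_euler_cuboid :: "nat \<Rightarrow> nat \<Rightarrow> nat \<Rightarrow> nat \<Rightarrow> nat \<Rightarrow> nat \<Rightarrow> nat \<Rightarrow> bool" where
  "perfect_euler_cuboid a b c \<alpha> \<beta> \<gamma> d \<longleftrightarrow>
     a > 0 \<and> b > 0 \<and> c > 0 \<and> \<alpha> > 0 \<and> \<beta> > 0 \<and> \<gamma> > 0 \<and> d > 0 \<and>
     a^2 + b^2 = \<gamma>^2 \<and> b^2 + c^2 = \<alpha>^2 \<and> c^2 + a^2 = \<beta>^2 \<and> a^2 + b^2 + c^2 = d^2"

definition D_uz :: "(real \<times> real) set" where
  "D_uz = {(u, z). 0 < u \<and> u < 1 \<and> 0 < z \<and> z < 1}"

definition f_map :: "real \<times> real \<Rightarrow> real \<times> real" where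
  "f_map p = (case p of (u, z) \<Rightarrow>
     (sqrt ((u^2 + z^2) / (u^2 * z^2 + 1)),
      sqrt (((1 + u^2) * (1 + z^2) - 2 * z * (1 - u^2)) /
            ((1 + u^2) * (1 + z^2) + 2 * z * (1 - u^2)))))"

definition D_ab :: "(real \<times> real) set" where
  "D_ab = f_map ` D_uz"

definition char_poly :: "real \<Rightarrow> real \<Rightarrow> real \<Rightarrow> real" where
  "char_poly a b u =
     u^4*a^4*b^4 + 6*a^4*u^2*b^4 - 2*u^4*a^4*b^2 - 2*u^4*a^2*b^4 + 4*u^2*b^4*a^2 + 4*a^4*u^2*b^2 - 12*u^4*a^2*b^2
     + u^4*a^4 + u^4*b^4 + a^4*b^4 + 6*a^4*u^2 + 6*u^2*b^4 - 8*a^2*b^2*u^2 - 2*u^4*a^2 - 2*u^4*b^2 - 2*a^4*b^2 - 2*b^4*a^2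
     + u^4 + b^4 + a^4 + 4*a^2*u^2 + 4*b^2*u^2 - 12*b^2*a^2 + 6*u^2 - 2*a^2 - 2*b^2 + 1"

end

theory Submission
  imports Defs
begin
lemma P_id: "char_poly a b u = (1-a^2)^2*(1+b^2)^2*(1+u^2)^2+(1-b^2)^2*(1+a^2)^2*(1+u^2)^2-(1-u^2)^2*(1+a^2)^2*(1+b^2)^2"
  unfolding char_poly_def by algebra

lemma sq_frac:
  fixes D G C :: real
  assumes "C^2 = D^2 - G^2" "C > 0" "D + G > 0"
  shows "((D - G)/C)^2 = (D - G)/(D + G)"
proof -
  have "((D - G)/C)^2 = (D-G)^2/C^2" by (simp add: power_divide)
  also have "\<dots> = (D-G)^2/((D-G)*(D+G))" using assms(1) by (simp add: algebra_simps power2_eq_square)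
  also have "\<dots> = (D - G)/(D + G)" using assms by (simp add: power2_eq_square)
  finally show ?thesis .
qed

lemma E1_id:
  fixes D G A :: real
  assumes "D + G > 0" "G + A > 0" "D + A > 0" "G > 0"
  shows "((D-G)/(D+G) + (G-A)/(G+A)) / ((D-G)/(D+G) * ((G-A)/(G+A)) + 1) = (D-A)/(D+A)"
proof -
  have n: "(D-G)/(D+G) + (G-A)/(G+A) = (2*G/(D+G)/(G+A)) * (D-A)"
    using assms by (simp add: divide_simps) (simp add: algebra_simps)
  have d: "(D-G)/(D+G) * ((G-A)/(G+A)) + 1 = (2*G/(D+G)/(G+A)) * (D+A)"
    using assms by (simp add: divide_simps) (simp add: algebra_simps)
  have "2*G/(D+G)/(G+A) \<noteq> 0" "4*G/(D+G)/(G+A) \<noteq> 0" using assms by auto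
  then show ?thesis unfolding n d by (metis mult_divide_mult_cancel_left)
qed

lemma E2_id:
  fixes D G A B :: real
  assumes "D + G > 0" "G + A > 0" "D + B > 0" "G > 0" "D > B"
  shows "((1 + (D-G)/(D+G)) * (1 + (G-A)/(G+A)) - 2 * (B/(G+A)) * (1 - (D-G)/(D+G))) /
         ((1 + (D-G)/(D+G)) * (1 + (G-A)/(G+A)) + 2 * (B/(G+A)) * (1 - (D-G)/(D+G))) = (D-B)/(D+B)"
proof -
  have n: "(1 + (D-G)/(D+G)) * (1 + (G-A)/(G+A)) - 2 * (B/(G+A)) * (1 - (D-G)/(D+G)) = (4*G/(D+G)/(G+A)) * (D-B)"
    using assms by (simp add: divide_simps) (simp add: algebra_simps)
  have d: "(1 + (D-G)/(D+G)) * (1 + (G-A)/(G+A)) + 2 * (B/(G+A)) * (1 - (D-G)/(D+G)) = (4*G/(D+G)/(G+A)) * (D+B)"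
    using assms by (simp add: divide_simps) (simp add: algebra_simps)
  have "2*G/(D+G)/(G+A) \<noteq> 0" "4*G/(D+G)/(G+A) \<noteq> 0" using assms by auto
  then show ?thesis unfolding n d by (metis mult_divide_mult_cancel_left)
qed

lemma P0_id:
  fixes D G A B :: real
  assumes "D + G > 0" "D + A > 0" "D + B > 0" "A^2 + B^2 = G^2"
  shows "(1-(D-A)/(D+A))^2*(1+(D-B)/(D+B))^2*(1+(D-G)/(D+G))^2+(1-(D-B)/(D+B))^2*(1+(D-A)/(D+A))^2*(1+(D-G)/(D+G))^2-(1-(D-G)/(D+G))^2*(1+(D-A)/(D+A))^2*(1+(D-B)/(D+B))^2 = 0"
proof -
  have h1: "1-(D-A)/(D+A) = 2*A/(D+A)" "1+(D-A)/(D+A) = 2*D/(D+A)"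
       "1-(D-B)/(D+B) = 2*B/(D+B)" "1+(D-B)/(D+B) = 2*D/(D+B)"
       "1-(D-G)/(D+G) = 2*G/(D+G)" "1+(D-G)/(D+G) = 2*D/(D+G)"
    using assms by (simp_all add: field_simps)
  have "(2*A/(D+A))^2*(2*D/(D+B))^2*(2*D/(D+G))^2+(2*B/(D+B))^2*(2*D/(D+A))^2*(2*D/(D+G))^2-(2*G/(D+G))^2*(2*D/(D+A))^2*(2*D/(D+B))^2
     = 64*D^4*(A^2+B^2-G^2)/((D+A)^2*(D+B)^2*(D+G)^2)"
    using assms by (simp add: field_simps) (metis assms(4) distrib_right)
  then show ?thesis unfolding h1 using assms(4) by simp
qed

lemma nat_sq2: "real a^2 + real b^2 = real c^2 \<Longrightarrow> a^2 + b^2 = (c::nat)^2"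
  by (metis of_nat_add of_nat_eq_iff of_nat_power)

lemma nat_sq3: "real a^2 + real b^2 + real c^2 = real d^2 \<Longrightarrow> a^2 + b^2 + c^2 = (d::nat)^2"
  by (metis of_nat_add of_nat_eq_iff of_nat_power)

lemma rat_den: assumes "(x::real) \<in> \<rat>" shows "\<exists>n::nat. n > 0 \<and> real n * x \<in> \<int>"
proof -
  from assms obtain p q :: int where q: "q > 0" and x: "x = of_int p / of_int q"
    by (auto elim: Rats_cases')
  have "real (nat q) * x = of_int p" using q x by simp
  then show ?thesis using q by (intro exI[of _ "nat q"]) auto
qed

lemma den_mult: assumes "real n * x \<in> \<int>" shows "real (m*n) * x \<in> \<int>"
proof -
  have "real (m*n) * x = real m * (real n * x)" by simp
  then show ?thesis using assms by (metis Ints_mult Ints_of_nat)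
qed

lemma int_pos_nat: assumes "(y::real) \<in> \<int>" "y > 0" shows "\<exists>k::nat. k > 0 \<and> y = real k"
proof -
  from assms(1) obtain i where y: "y = of_int i" by (auto elim: Ints_cases)
  then have "i > 0" using assms(2) by simp
  then show ?thesis using y by (intro exI[of _ "nat i"]) auto
qed

lemma scale:
  fixes x1 x2 x3 x4 x5 x6 x7 :: real
  assumes q: "x1 \<in> \<rat>" "x2 \<in> \<rat>" "x3 \<in> \<rat>" "x4 \<in> \<rat>" "x5 \<in> \<rat>" "x6 \<in> \<rat>" "x7 \<in> \<rat>"
    and pos: "x1 > 0" "x2 > 0" "x3 > 0" "x4 > 0" "x5 > 0" "x6 > 0" "x7 > 0"
    and r1: "x1^2 + x2^2 = x6^2" and r2: "x2^2 + x3^2 = x4^2" and r3: "x3^2 + x1^2 = x5^2"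
    and r4: "x1^2 + x2^2 + x3^2 = x7^2"
  shows "\<exists>a b c \<alpha> \<beta> \<gamma> d. perfect_euler_cuboid a b c \<alpha> \<beta> \<gamma> d"
proof -
  obtain n1 where n1: "n1 > 0" "real n1 * x1 \<in> \<int>" using rat_den[OF q(1)] by blast
  obtain n2 where n2: "n2 > 0" "real n2 * x2 \<in> \<int>" using rat_den[OF q(2)] by blast
  obtain n3 where n3: "n3 > 0" "real n3 * x3 \<in> \<int>" using rat_den[OF q(3)] by blast
  obtain n4 where n4: "n4 > 0" "real n4 * x4 \<in> \<int>" using rat_den[OF q(4)] by blast
  obtain n5 where n5: "n5 > 0" "real n5 * x5 \<in> \<int>" using rat_den[OF q(5)] by blast
  obtain n6 where n6: "n6 > 0" "real n6 * x6 \<in> \<int>" using rat_den[OF q(6)] by blast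
  obtain n7 where n7: "n7 > 0" "real n7 * x7 \<in> \<int>" using rat_den[OF q(7)] by blast
  define N where "N = n1*n2*n3*n4*n5*n6*n7"
  have Npos: "real N > 0" using n1 n2 n3 n4 n5 n6 n7 by (simp add: N_def)
  have i1: "real N * x1 \<in> \<int>" using den_mult[OF n1(2), of "n2*n3*n4*n5*n6*n7"] by (simp add: N_def ac_simps)
  have i2: "real N * x2 \<in> \<int>" using den_mult[OF n2(2), of "n1*n3*n4*n5*n6*n7"] by (simp add: N_def ac_simps)
  have i3: "real N * x3 \<in> \<int>" using den_mult[OF n3(2), of "n1*n2*n4*n5*n6*n7"] by (simp add: N_def ac_simps)
  have i4: "real N * x4 \<in> \<int>" using den_mult[OF n4(2), of "n1*n2*n3*n5*n6*n7"] by (simp add: N_def ac_simps)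
  have i5: "real N * x5 \<in> \<int>" using den_mult[OF n5(2), of "n1*n2*n3*n4*n6*n7"] by (simp add: N_def ac_simps)
  have i6: "real N * x6 \<in> \<int>" using den_mult[OF n6(2), of "n1*n2*n3*n4*n5*n7"] by (simp add: N_def ac_simps)
  have i7: "real N * x7 \<in> \<int>" using den_mult[OF n7(2), of "n1*n2*n3*n4*n5*n6"] by (simp add: N_def ac_simps)
  obtain k1 where k1: "k1 > 0" "real N * x1 = real k1" using int_pos_nat[OF i1] Npos pos by auto
  obtain k2 where k2: "k2 > 0" "real N * x2 = real k2" using int_pos_nat[OF i2] Npos pos by auto
  obtain k3 where k3: "k3 > 0" "real N * x3 = real k3" using int_pos_nat[OF i3] Npos pos by auto
  obtain k4 where k4: "k4 > 0" "real N * x4 = real k4" using int_pos_nat[OF i4] Npos pos by auto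
  obtain k5 where k5: "k5 > 0" "real N * x5 = real k5" using int_pos_nat[OF i5] Npos pos by auto
  obtain k6 where k6: "k6 > 0" "real N * x6 = real k6" using int_pos_nat[OF i6] Npos pos by auto
  obtain k7 where k7: "k7 > 0" "real N * x7 = real k7" using int_pos_nat[OF i7] Npos pos by auto
  have e1: "(real N * x1)^2 + (real N * x2)^2 = (real N * x6)^2"
  proof -
    have "(real N * x1)^2 + (real N * x2)^2 = (real N)^2 * (x1^2 + x2^2)" by algebra
    then show ?thesis using r1 by (simp add: power_mult_distrib)
  qed
  have e2: "(real N * x2)^2 + (real N * x3)^2 = (real N * x4)^2"
  proof -
    have "(real N * x2)^2 + (real N * x3)^2 = (real N)^2 * (x2^2 + x3^2)" by algebra
    then show ?thesis using r2 by (simp add: power_mult_distrib)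
  qed
  have e3: "(real N * x3)^2 + (real N * x1)^2 = (real N * x5)^2"
  proof -
    have "(real N * x3)^2 + (real N * x1)^2 = (real N)^2 * (x3^2 + x1^2)" by algebra
    then show ?thesis using r3 by (simp add: power_mult_distrib)
  qed
  have e4: "(real N * x1)^2 + (real N * x2)^2 + (real N * x3)^2 = (real N * x7)^2"
  proof -
    have "(real N * x1)^2 + (real N * x2)^2 + (real N * x3)^2 = (real N)^2 * (x1^2 + x2^2 + x3^2)" by algebra
    then show ?thesis using r4 by (simp add: power_mult_distrib)
  qed
  have "perfect_euler_cuboid k1 k2 k3 k4 k5 k6 k7"
    unfolding perfect_euler_cuboid_def
    using k1 k2 k3 k4 k5 k6 k7 nat_sq2[of k1 k2 k6] nat_sq2[of k2 k3 k4] nat_sq2[of k3 k1 k5]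
      nat_sq3[of k1 k2 k3 k7] e1 e2 e3 e4 by auto
  then show ?thesis by blast
qed

lemma Dab_bounds: assumes "(a,b) \<in> D_ab" shows "0 < a \<and> a < 1 \<and> 0 < b \<and> b < 1"
proof -
  from assms obtain u z where uz: "0 < u" "u < 1" "0 < z" "z < 1"
    and ab: "(a,b) = f_map (u,z)" unfolding D_ab_def D_uz_def by auto
  have a: "a = sqrt ((u^2 + z^2) / (u^2 * z^2 + 1))" and
       b: "b = sqrt (((1 + u^2) * (1 + z^2) - 2 * z * (1 - u^2)) /
            ((1 + u^2) * (1 + z^2) + 2 * z * (1 - u^2)))"
    using ab by (auto simp: f_map_def)
  have u2: "0 < u^2" "u^2 < 1" using uz by (auto simp: power_less_one_iff)
  have z2: "0 < z^2" "z^2 < 1" using uz by (auto simp: power_less_one_iff)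
  have "(1 - u^2) * (1 - z^2) > 0" using u2 z2 by simp
  then have "u^2 + z^2 < u^2 * z^2 + 1" by (simp add: algebra_simps)
  moreover have den: "u^2 * z^2 + 1 > 0" using u2 z2 by (simp add: add_pos_pos)
  moreover have num: "u^2 + z^2 > 0" using u2(1) z2(1) by (rule add_pos_pos)
  ultimately have a1: "0 < (u^2 + z^2) / (u^2 * z^2 + 1)" "(u^2 + z^2) / (u^2 * z^2 + 1) < 1"
    by (simp_all only: divide_pos_pos divide_less_eq_1_pos)
  have M: "0 < 2 * z * (1 - u^2)" using uz u2 by simp
  have m1: "2 * z * (1 - u^2) < 2 * z" using uz u2 by simp
  have "0 \<le> (1 - z)^2" by simp
  then have m2: "2 * z \<le> 1 + z^2" by (simp add: power2_diff)
  have m3: "1 + z^2 < (1 + u^2) * (1 + z^2)" using u2 z2 by (simp add: algebra_simps add_pos_pos)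
  have NM1: "0 < (1 + u^2) * (1 + z^2) - 2 * z * (1 - u^2)" using m1 m2 m3 by linarith
  have NM2: "0 < (1 + u^2) * (1 + z^2) + 2 * z * (1 - u^2)" using M m1 m2 m3 by linarith
  have NM3: "(1 + u^2) * (1 + z^2) - 2 * z * (1 - u^2) < (1 + u^2) * (1 + z^2) + 2 * z * (1 - u^2)" using M by linarith
  have b1: "0 < ((1 + u^2) * (1 + z^2) - 2 * z * (1 - u^2)) /
            ((1 + u^2) * (1 + z^2) + 2 * z * (1 - u^2))"
    using NM1 NM2 by (rule divide_pos_pos)
  have b2: "((1 + u^2) * (1 + z^2) - 2 * z * (1 - u^2)) /
            ((1 + u^2) * (1 + z^2) + 2 * z * (1 - u^2)) < 1"
    using NM2 NM3 by (simp only: divide_less_eq_1_pos)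
  show ?thesis using a b a1 b1 b2 by simp
qed

lemma pos_base_lt: "(x::real) \<ge> 0 \<Longrightarrow> y \<ge> 0 \<Longrightarrow> x^2 < y^2 \<Longrightarrow> x < y"
  using power_less_imp_less_base by blast

lemma forward:
  assumes "perfect_euler_cuboid a0 b0 c0 al be ga d0"
  shows "\<exists>a b u :: real. a \<in> \<rat> \<and> b \<in> \<rat> \<and> u \<in> \<rat> \<and> 0 < u \<and> u < 1 \<and>
             (a, b) \<in> D_ab \<and> char_poly a b u = 0"
proof -
  define A where "A = real a0"
  define B where "B = real b0"
  define C where "C = real c0"
  define Al where "Al = real al"
  define Be where "Be = real be"
  define G where "G = real ga"
  define D where "D = real d0"
  have pos: "A > 0" "B > 0" "C > 0" "Al > 0" "Be > 0" "G > 0" "D > 0"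
    using assms by (auto simp: perfect_euler_cuboid_def A_def B_def C_def Al_def Be_def G_def D_def)
  have nrel: "a0^2 + b0^2 = ga^2" "b0^2 + c0^2 = al^2" "c0^2 + a0^2 = be^2" "a0^2 + b0^2 + c0^2 = d0^2"
    using assms by (auto simp: perfect_euler_cuboid_def)
  have r1: "A^2 + B^2 = G^2" unfolding A_def B_def G_def
    by (metis nrel(1) of_nat_add of_nat_power)
  have r2: "B^2 + C^2 = Al^2" unfolding Al_def B_def C_def
    by (metis nrel(2) of_nat_add of_nat_power)
  have r3: "C^2 + A^2 = Be^2" unfolding A_def Be_def C_def
    by (metis nrel(3) of_nat_add of_nat_power)
  have r4: "A^2 + B^2 + C^2 = D^2" unfolding A_def B_def C_def D_def
    by (metis nrel(4) of_nat_add of_nat_power)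
  have sC: "C^2 = D^2 - G^2" using r1 r4 by simp
  have sB: "B^2 = G^2 - A^2" using r1 by simp
  have sAl: "Al^2 = D^2 - A^2" using r2 r4 by simp
  have sBe: "Be^2 = D^2 - B^2" using r3 r4 by simp
  have sq: "A^2 > 0" "B^2 > 0" "C^2 > 0" "Al^2 > 0" "Be^2 > 0" "G*C > 0" "A*B > 0"
    using pos by simp_all
  have DG: "G < D" by (rule pos_base_lt) (use pos sC sq in linarith)+
  have DG2: "D < G + C"
  proof (rule pos_base_lt)
    show "D^2 < (G+C)^2" unfolding power2_sum using sC sq by linarith
  qed (use pos in linarith)+
  have GA: "A < G" by (rule pos_base_lt) (use pos sB sq in linarith)+
  have GA2: "G < A + B"
  proof (rule pos_base_lt)
    show "G^2 < (A+B)^2" unfolding power2_sum using sB sq by linarith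
  qed (use pos in linarith)+
  have DA: "A < D" by (rule pos_base_lt) (use pos sAl sq in linarith)+
  have DB: "B < D" by (rule pos_base_lt) (use pos sBe sq in linarith)+
  define u where "u = (D - G)/C"
  define z where "z = (G - A)/B"
  define a where "a = (D - A)/Al"
  define b where "b = (D - B)/Be"
  have hU: "u^2 = (D-G)/(D+G)" unfolding u_def using sC pos by (intro sq_frac) auto
  have hZ: "z^2 = (G-A)/(G+A)" unfolding z_def using sB pos by (intro sq_frac) auto
  have hA: "a^2 = (D-A)/(D+A)" unfolding a_def using sAl pos by (intro sq_frac) auto
  have hB: "b^2 = (D-B)/(D+B)" unfolding b_def using sBe pos by (intro sq_frac) auto
  have hz: "z = B/(G+A)"
  proof -
    have "(G-A)*(G+A) = B*B" using sB by (simp add: algebra_simps power2_eq_square)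
    then show ?thesis unfolding z_def using pos GA by (simp add: field_simps)
  qed
  have a0: "a \<ge> 0" "b \<ge> 0" unfolding a_def b_def using pos DA DB by auto
  have fm: "f_map (u, z) = (a, b)"
  proof -
    have "f_map (u, z) = (sqrt ((u^2 + z^2) / (u^2 * z^2 + 1)),
      sqrt (((1 + u^2) * (1 + z^2) - 2 * z * (1 - u^2)) /
            ((1 + u^2) * (1 + z^2) + 2 * z * (1 - u^2))))" by (simp add: f_map_def)
    also have "\<dots> = (sqrt (a^2), sqrt (b^2))"
      unfolding hU hZ hA hB unfolding hz
      using E1_id[of D G A] E2_id[of D G A B] pos DG GA DA DB by simp
    also have "\<dots> = (a, b)" using a0 by simp
    finally show ?thesis .
  qed
  have uz: "(u, z) \<in> D_uz" unfolding D_uz_def u_def z_def using pos DG DG2 GA GA2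
    by (auto simp: field_simps)
  have ab: "(a, b) \<in> D_ab" unfolding D_ab_def using fm uz by (metis image_eqI)
  have P: "char_poly a b u = 0" unfolding P_id hA hB hU
    using P0_id[of D G A B] pos r1 by simp
  have rats: "a \<in> \<rat>" "b \<in> \<rat>" "u \<in> \<rat>"
    unfolding a_def b_def u_def A_def B_def C_def Al_def Be_def G_def D_def
    by (intro Rats_divide Rats_diff Rats_of_nat)+
  have u01: "0 < u" "u < 1" unfolding u_def using pos DG DG2 by (auto simp: field_simps)
  show ?thesis using rats u01 ab P by blast
qed

lemma backward:
  fixes a b u :: real
  assumes q: "a \<in> \<rat>" "b \<in> \<rat>" "u \<in> \<rat>"
    and bd: "0 < a" "a < 1" "0 < b" "b < 1" "0 < u" "u < 1"
    and P: "char_poly a b u = 0"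
  shows "\<exists>a b c \<alpha> \<beta> \<gamma> d. perfect_euler_cuboid a b c \<alpha> \<beta> \<gamma> d"
proof -
  define p where "p = (1-a^2)/(1+a^2)"
  define qq where "qq = (1-b^2)/(1+b^2)"
  define r where "r = (1-u^2)/(1+u^2)"
  define s where "s = 2*u/(1+u^2)"
  define sa where "sa = 2*a/(1+a^2)"
  define sb where "sb = 2*b/(1+b^2)"
  have nz: "1 + a^2 \<noteq> 0" "1 + b^2 \<noteq> 0" "1 + u^2 \<noteq> 0"
    by (metis add_pos_nonneg less_numeral_extra(1) zero_le_power2 less_irrefl)+
  have E0: "p^2 + qq^2 - r^2 = char_poly a b u / ((1+a^2)^2*(1+b^2)^2*(1+u^2)^2)"
    unfolding P_id p_def qq_def r_def using nz by (simp add: field_simps)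
  have E1: "p^2 + qq^2 = r^2" using E0 P by simp
  have Sa: "sa^2 = 1 - p^2" unfolding sa_def p_def using nz by (simp add: field_simps) (simp add: algebra_simps power2_eq_square)
  have Sb: "sb^2 = 1 - qq^2" unfolding sb_def qq_def using nz by (simp add: field_simps) (simp add: algebra_simps power2_eq_square)
  have Ss: "s^2 = 1 - r^2" unfolding s_def r_def using nz by (simp add: field_simps) (simp add: algebra_simps power2_eq_square)
  have a2: "a^2 < 1" "b^2 < 1" "u^2 < 1" using bd by (auto simp: power_less_one_iff)
  have pos: "p > 0" "qq > 0" "s > 0" "sa > 0" "sb > 0" "r > 0"
    unfolding p_def qq_def s_def sa_def sb_def r_def using bd a2
    by (auto intro!: divide_pos_pos add_pos_nonneg)
  have rats: "p \<in> \<rat>" "qq \<in> \<rat>" "s \<in> \<rat>" "sa \<in> \<rat>" "sb \<in> \<rat>" "r \<in> \<rat>" "(1::real) \<in> \<rat>"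
    unfolding p_def qq_def s_def sa_def sb_def r_def using q
    by (auto intro!: Rats_divide Rats_diff Rats_add Rats_mult Rats_power)
  show ?thesis
  proof (rule scale[of p qq s sa sb r 1])
    show "p^2 + qq^2 = r^2" by (rule E1)
    show "qq^2 + s^2 = sa^2" using E1 Sa Ss by simp
    show "s^2 + p^2 = sb^2" using E1 Sb Ss by simp
    show "p^2 + qq^2 + s^2 = 1^2" using E1 Ss by simp
  qed (use rats pos in auto)
qed

theorem theorem5p2:
  shows "(\<exists>a b c \<alpha> \<beta> \<gamma> d. perfect_euler_cuboid a b c \<alpha> \<beta> \<gamma> d) \<longleftrightarrow>
         (\<exists>a b u :: real. a \<in> \<rat> \<and> b \<in> \<rat> \<and> u \<in> \<rat> \<and> 0 < u \<and> u < 1 \<and>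
             (a, b) \<in> D_ab \<and> char_poly a b u = 0)"
proof
  assume "\<exists>a b c \<alpha> \<beta> \<gamma> d. perfect_euler_cuboid a b c \<alpha> \<beta> \<gamma> d"
  then obtain a b c \<alpha> \<beta> \<gamma> d where "perfect_euler_cuboid a b c \<alpha> \<beta> \<gamma> d" by blast
  then show "\<exists>a b u :: real. a \<in> \<rat> \<and> b \<in> \<rat> \<and> u \<in> \<rat> \<and> 0 < u \<and> u < 1 \<and>
             (a, b) \<in> D_ab \<and> char_poly a b u = 0" by (rule forward)
next
  assume "\<exists>a b u :: real. a \<in> \<rat> \<and> b \<in> \<rat> \<and> u \<in> \<rat> \<and> 0 < u \<and> u < 1 \<and>
             (a, b) \<in> D_ab \<and> char_poly a b u = 0"
  then obtain a b u :: real where h: "a \<in> \<rat>" "b \<in> \<rat>" "u \<in> \<rat>" "0 < u" "u < 1"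
    "(a, b) \<in> D_ab" "char_poly a b u = 0" by blast
  from Dab_bounds[OF h(6)] h show "\<exists>a b c \<alpha> \<beta> \<gamma> d. perfect_euler_cuboid a b c \<alpha> \<beta> \<gamma> d"
    by (intro backward[of a b u]) auto
qed

end
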